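(* Let $k\ge 2$ and $m\ge 3$ be integers. Then $$\frac{(m-1)^k}{2}+\frac{m-1}{2}+1\;\le\; M_k(m)\;\le\;(m-1)^k+1.$$ More generally, for all positive integers $m_1,\ldots,m_k$, $$M(m_1,\ldots,m_k)\le \prod_{i=1}^{k}(m_i-1)+1.$$
   Context: All graphs are finite and simple. A path $v_1,v_2,\ldots,v_r$ in a graph $G$ is degree-monotone if $\deg_G(v_1)\le \deg_G(v_2)\le\cdots\le\deg_G(v_r)$, where $\deg_G$ denotes degree in $G$; its order is its number of vertices $r$. Let $mp(G)$ be the maximum order of a degree-monotone path in $G$. For a $k$-edge-coloring of $K_n$ with colors $1,\ldots,k$, let $G_j$ be the spanning subgraph of $K_n$ whose edges are those colored $j$ (degrees are taken in $G_j$). $M(m_1,\ldots,m_k)$ is the minimum integer $M$ such that for every $n\ge M$ and every $k$-edge-coloring of $K_n$ there is some $j\in\{1,\ldots,k\}$ with $mp(G_j)\ge m_j$. $M_k(m)$ denotes $M(m,m,\ldots,m)$ ($k$ entries). *)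

theory Defs
  imports Complex_Main
begin

text \<open>Vertices of K_n are 0..<n. A k-edge-coloring is a symmetric c with c u v < k
for distinct u v < n (colors 0..<k stand for the paper's colors 1..k).
The color-j graph G_j has edge uv iff c u v = j.\<close>

definition is_coloring :: "nat \<Rightarrow> nat \<Rightarrow> (nat \<Rightarrow> nat \<Rightarrow> nat) \<Rightarrow> bool" where
  "is_coloring n k c = (\<forall>u<n. \<forall>v<n. u \<noteq> v \<longrightarrow> c u v < k \<and> c u v = c v u)"

definition cdeg :: "nat \<Rightarrow> (nat \<Rightarrow> nat \<Rightarrow> nat) \<Rightarrow> nat \<Rightarrow> nat \<Rightarrow> nat" where
  "cdeg n c j v = card {u. u < n \<and> u \<noteq> v \<and> c v u = j}"

definition dm_path :: "nat \<Rightarrow> (nat \<Rightarrow> nat \<Rightarrow> nat) \<Rightarrow> nat \<Rightarrow> nat list \<Rightarrow> bool" where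
  "dm_path n c j p = (distinct p \<and> set p \<subseteq> {..<n} \<and>
     (\<forall>i. Suc i < length p \<longrightarrow> c (p ! i) (p ! Suc i) = j \<and>
          cdeg n c j (p ! i) \<le> cdeg n c j (p ! Suc i)))"

definition mp :: "nat \<Rightarrow> (nat \<Rightarrow> nat \<Rightarrow> nat) \<Rightarrow> nat \<Rightarrow> nat" where
  "mp n c j = Max (length ` {p. dm_path n c j p})"

definition good :: "nat list \<Rightarrow> nat \<Rightarrow> bool" where
  "good ms M = (\<forall>n\<ge>M. \<forall>c. is_coloring n (length ms) c \<longrightarrow>
                  (\<exists>j<length ms. mp n c j \<ge> ms ! j))"

definition Mnum :: "nat list \<Rightarrow> nat" where
  "Mnum ms = (LEAST M. good ms M)"

definition Mk :: "nat \<Rightarrow> nat \<Rightarrow> nat" where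
  "Mk k m = Mnum (replicate k m)"

end

theory Submission
  imports Defs "HOL-Library.FuncSet"
begin

lemma sorted_wrt_irrefl_distinct:
  "sorted_wrt P xs \<Longrightarrow> (\<And>x. \<not> P x x) \<Longrightarrow> distinct xs"
  by (induction xs) auto

lemma dm_len: "dm_path n c j p \<Longrightarrow> length p \<le> n"
  unfolding dm_path_def by (metis card_lessThan card_mono distinct_card finite_lessThan)

lemma dm_nil: "dm_path n c j []"
  unfolding dm_path_def by simp

lemma mp_fin: "finite (length ` {p. dm_path n c j p})"
  by (rule finite_subset[of _ "{..n}"]) (auto dest: dm_len)

lemma mp_ge: "dm_path n c j p \<Longrightarrow> length p \<le> mp n c j"
  unfolding mp_def using mp_fin by (auto intro: Max_ge)

lemma mp_le: "(\<And>p. dm_path n c j p \<Longrightarrow> length p \<le> a) \<Longrightarrow> mp n c j \<le> a"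
  unfolding mp_def by (rule Max.boundedI) (auto simp: mp_fin intro: dm_nil)

definition lexlt where
  "lexlt n c j u v \<longleftrightarrow> cdeg n c j u < cdeg n c j v \<or> (cdeg n c j u = cdeg n c j v \<and> u < v)"

definition inc_path where
  "inc_path n c j p \<longleftrightarrow> set p \<subseteq> {..<n} \<and>
     (\<forall>i. Suc i < length p \<longrightarrow> c (p!i) (p!Suc i) = j \<and> lexlt n c j (p!i) (p!Suc i))"

lemma inc_dm: "inc_path n c j p \<Longrightarrow> dm_path n c j p"
proof -
  assume h: "inc_path n c j p"
  have tr: "transp (lexlt n c j)" unfolding transp_def lexlt_def by auto
  have "sorted_wrt (lexlt n c j) p"
    using h unfolding inc_path_def by (simp add: sorted_wrt_iff_nth_Suc_transp[OF tr])
  then have "distinct p" by (rule sorted_wrt_irrefl_distinct) (simp add: lexlt_def)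
  then show ?thesis using h unfolding inc_path_def dm_path_def lexlt_def by auto
qed

definition Lf where
  "Lf n c j v = Max (length ` {p. inc_path n c j p \<and> p \<noteq> [] \<and> hd p = v})"

lemma Lf_fin: "finite (length ` {p. inc_path n c j p \<and> p \<noteq> [] \<and> hd p = v})"
  by (rule finite_subset[of _ "{..n}"]) (auto dest: dm_len inc_dm)

lemma inc_single: "v < n \<Longrightarrow> inc_path n c j [v]"
  unfolding inc_path_def by simp

lemma Lf_ge1: "v < n \<Longrightarrow> 1 \<le> Lf n c j v"
proof -
  assume v: "v < n"
  have "[v] \<in> {p. inc_path n c j p \<and> p \<noteq> [] \<and> hd p = v}" using inc_single[OF v] by simp
  then have "length [v] \<in> length ` {p. inc_path n c j p \<and> p \<noteq> [] \<and> hd p = v}" by (rule imageI)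
  then have "length [v] \<le> Lf n c j v" unfolding Lf_def using Lf_fin by (rule Max_ge[rotated])
  then show ?thesis by simp
qed

lemma Lf_le: "v < n \<Longrightarrow> Lf n c j v \<le> mp n c j"
proof -
  assume v: "v < n"
  have "[v] \<in> {p. inc_path n c j p \<and> p \<noteq> [] \<and> hd p = v}" using inc_single[OF v] by simp
  then have ne: "length ` {p. inc_path n c j p \<and> p \<noteq> [] \<and> hd p = v} \<noteq> {}" by blast
  show ?thesis unfolding Lf_def
  proof (rule Max.boundedI[OF Lf_fin ne])
    fix x assume "x \<in> length ` {p. inc_path n c j p \<and> p \<noteq> [] \<and> hd p = v}"
    then obtain p where "inc_path n c j p" "x = length p" by blast
    then show "x \<le> mp n c j" using mp_ge inc_dm by blast
  qed
qed

lemma Lf_step: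
  assumes "u < n" "v < n" "c u v = j" "lexlt n c j u v"
  shows "Lf n c j v < Lf n c j u"
proof -
  let ?S = "{p. inc_path n c j p \<and> p \<noteq> [] \<and> hd p = v}"
  have "[v] \<in> ?S" using inc_single assms by auto
  then have "Max (length ` ?S) \<in> length ` ?S" using Lf_fin by (intro Max_in) auto
  then obtain p where p: "p \<in> ?S" "Lf n c j v = length p" unfolding Lf_def by auto
  have p0: "p ! 0 = v" using p by (auto simp: hd_conv_nth[symmetric])
  have "inc_path n c j (u # p)"
    unfolding inc_path_def
  proof (rule conjI)
    show "set (u # p) \<subseteq> {..<n}" using p assms unfolding inc_path_def by auto
  next
    show "\<forall>i. Suc i < length (u # p) \<longrightarrow> c ((u # p) ! i) ((u # p) ! Suc i) = j \<and> lexlt n c j ((u # p) ! i) ((u # p) ! Suc i)"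
    proof (intro allI impI)
    fix i assume i: "Suc i < length (u # p)"
    show "c ((u # p) ! i) ((u # p) ! Suc i) = j \<and> lexlt n c j ((u # p) ! i) ((u # p) ! Suc i)"
    proof (cases i)
      case 0 then show ?thesis using p0 assms by simp
    next
      case (Suc i') then show ?thesis using i p unfolding inc_path_def by simp
    qed
    qed
  qed
  then have "u # p \<in> {p. inc_path n c j p \<and> p \<noteq> [] \<and> hd p = u}" by simp
  then have "length (u # p) \<in> length ` {p. inc_path n c j p \<and> p \<noteq> [] \<and> hd p = u}" by (rule imageI)
  then have "length (u # p) \<le> Lf n c j u" unfolding Lf_def using Lf_fin by (rule Max_ge[rotated])
  then show ?thesis using p by simp
qed

lemma prod_list_nth: "prod_list (map f xs) = (\<Prod>j<length xs. f (xs ! j))"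
  by (induction xs) (simp_all add: prod.lessThan_Suc_shift del: prod.lessThan_Suc)

lemma upper: "good ms (prod_list (map (\<lambda>x. x - 1) ms) + 1)"
  unfolding good_def
proof (intro allI impI)
  fix n c
  assume n: "prod_list (map (\<lambda>x. x - 1) ms) + 1 \<le> n" and col: "is_coloring n (length ms) c"
  let ?k = "length ms"
  show "\<exists>j<?k. ms ! j \<le> mp n c j"
  proof (rule ccontr)
    assume "\<not> ?thesis"
    then have lt: "\<And>j. j < ?k \<Longrightarrow> mp n c j < ms ! j" by auto
    define f where "f v = (\<lambda>j\<in>{..<?k}. Lf n c j v)" for v
    let ?B = "PiE {..<?k} (\<lambda>j. {1..ms!j - 1})"
    have img: "f ` {..<n} \<subseteq> ?B"
    proof
      fix x assume "x \<in> f ` {..<n}"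
      then obtain v where v: "v < n" "x = f v" by auto
      have "Lf n c j v \<in> {1..ms!j - 1}" if j: "j < ?k" for j
      proof -
        have "Lf n c j v \<le> mp n c j" by (rule Lf_le[OF v(1)])
        then have "Lf n c j v \<le> ms!j - 1" using lt[OF j] by simp
        then show ?thesis using Lf_ge1[OF v(1), of c j] by simp
      qed
      then show "x \<in> ?B" using v unfolding f_def by auto
    qed
    have inj: "inj_on f {..<n}"
    proof
      fix u v assume u: "u \<in> {..<n}" and v: "v \<in> {..<n}" and e: "f u = f v"
      show "u = v"
      proof (rule ccontr)
        assume ne: "u \<noteq> v"
        define j where "j = c u v"
        have j: "j < ?k" "c v u = j" using col u v ne unfolding is_coloring_def j_def by auto
        have "Lf n c j u = Lf n c j v" using fun_cong[OF e, of j] j unfolding f_def by simp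
        moreover have "lexlt n c j u v \<or> lexlt n c j v u" using ne unfolding lexlt_def by auto
        moreover have "c u v = j" unfolding j_def by simp
        moreover have "u < n" "v < n" using u v by auto
        ultimately show False using Lf_step[of u n v c j] Lf_step[of v n u c j] j(2) by fastforce
      qed
    qed
    have "card {..<n} \<le> card ?B"
      by (rule card_inj_on_le[OF inj img]) (simp add: finite_PiE)
    also have "card ?B = (\<Prod>j<?k. ms ! j - 1)" by (simp add: card_PiE)
    also have "\<dots> = prod_list (map (\<lambda>x. x - 1) ms)" by (simp add: prod_list_nth)
    finally show False using n by simp
  qed
qed

fun part :: "nat list \<Rightarrow> nat \<Rightarrow> nat" where
  "part [] v = 0"
| "part (s # ss) v = (if v < s then 0 else Suc (part ss (v - s)))"

fun loc :: "nat list \<Rightarrow> nat \<Rightarrow> nat" where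
  "loc [] v = v"
| "loc (s # ss) v = (if v < s then v else loc ss (v - s))"

lemma part_loc_bound: "v < sum_list ss \<Longrightarrow> part ss v < length ss \<and> loc ss v < ss ! part ss v"
proof (induction ss arbitrary: v)
  case Nil then show ?case by simp
next
  case (Cons s ss)
  show ?case
  proof (cases "v < s")
    case True then show ?thesis by simp
  next
    case False
    then have "v - s < sum_list ss" using Cons.prems by simp
    from Cons.IH[OF this] False show ?thesis by simp
  qed
qed

lemma part_loc_inj: "u < sum_list ss \<Longrightarrow> v < sum_list ss \<Longrightarrow> part ss u = part ss v \<Longrightarrow>
   loc ss u = loc ss v \<Longrightarrow> u = v"
proof (induction ss arbitrary: u v)
  case Nil then show ?case by simp
next
  case (Cons s ss)
  show ?case
  proof (cases "u < s")
    case True then show ?thesis using Cons.prems by (auto split: if_splits)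
  next
    case False
    then have "\<not> v < s" using Cons.prems by (auto split: if_splits)
    have "u - s < sum_list ss" "v - s < sum_list ss" using Cons.prems False \<open>\<not> v < s\<close> by auto
    moreover have "part ss (u - s) = part ss (v - s)" "loc ss (u - s) = loc ss (v - s)"
      using Cons.prems False \<open>\<not> v < s\<close> by auto
    ultimately have "u - s = v - s" using Cons.IH by blast
    then show ?thesis using False \<open>\<not> v < s\<close> by arith
  qed
qed

lemma part_loc_surj: "p < length ss \<Longrightarrow> l < ss ! p \<Longrightarrow>
   \<exists>v < sum_list ss. part ss v = p \<and> loc ss v = l"
proof (induction ss arbitrary: p)
  case Nil then show ?case by simp
next
  case (Cons s ss)
  show ?case
  proof (cases p)
    case 0 then show ?thesis using Cons.prems by (intro exI[of _ l]) auto
  next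
    case (Suc p')
    then obtain v where "v < sum_list ss" "part ss v = p'" "loc ss v = l"
      using Cons by auto
    then show ?thesis using Suc by (intro exI[of _ "s + v"]) auto
  qed
qed

definition bad :: "nat \<Rightarrow> nat \<Rightarrow> (nat \<Rightarrow> nat \<Rightarrow> nat) \<Rightarrow> nat \<Rightarrow> bool" where
  "bad n k c a \<longleftrightarrow> is_coloring n k c \<and> (\<forall>j<k. \<forall>p. dm_path n c j p \<longrightarrow> length p \<le> a)"

definition comb :: "nat list \<Rightarrow> (nat \<Rightarrow> nat \<Rightarrow> nat \<Rightarrow> nat) \<Rightarrow> nat \<Rightarrow> nat \<Rightarrow> nat \<Rightarrow> nat" where
  "comb ss col k u v = (if part ss u = part ss v then col (part ss u) (loc ss u) (loc ss v) else k)"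

lemma card_part: "p < length ss \<Longrightarrow> card {u. u < sum_list ss \<and> part ss u = p} = ss ! p"
proof -
  assume p: "p < length ss"
  have "bij_betw (loc ss) {u. u < sum_list ss \<and> part ss u = p} {..<ss ! p}"
    unfolding bij_betw_def
  proof
    show "inj_on (loc ss) {u. u < sum_list ss \<and> part ss u = p}"
    proof (rule inj_onI)
      fix x y assume "x \<in> {u. u < sum_list ss \<and> part ss u = p}" "y \<in> {u. u < sum_list ss \<and> part ss u = p}"
        "loc ss x = loc ss y"
      then show "x = y" using part_loc_inj[of x ss y] by simp
    qed
    show "loc ss ` {u. u < sum_list ss \<and> part ss u = p} = {..<ss ! p}"
    proof
      show "loc ss ` {u. u < sum_list ss \<and> part ss u = p} \<subseteq> {..<ss ! p}"
      proof
        fix l assume "l \<in> loc ss ` {u. u < sum_list ss \<and> part ss u = p}"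
        then obtain u where u: "u < sum_list ss" "part ss u = p" "l = loc ss u" by blast
        then show "l \<in> {..<ss ! p}" using part_loc_bound[OF u(1)] by simp
      qed
      show "{..<ss ! p} \<subseteq> loc ss ` {u. u < sum_list ss \<and> part ss u = p}"
      proof
        fix l assume "l \<in> {..<ss ! p}"
        then obtain u where "u < sum_list ss" "part ss u = p" "loc ss u = l"
          using part_loc_surj[OF p, of l] by auto
        then show "l \<in> loc ss ` {u. u < sum_list ss \<and> part ss u = p}" by blast
      qed
    qed
  qed
  then show ?thesis by (simp add: bij_betw_same_card)
qed

locale combo =
  fixes ss :: "nat list" and col :: "nat \<Rightarrow> nat \<Rightarrow> nat \<Rightarrow> nat" and k a :: nat
  assumes dist: "distinct ss" and len: "length ss \<le> a"
    and cols: "\<And>p. p < length ss \<Longrightarrow> bad (ss ! p) k (col p) a"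
begin

abbreviation "N \<equiv> sum_list ss"
abbreviation "C \<equiv> comb ss col k"

lemma colcol: "p < length ss \<Longrightarrow> is_coloring (ss ! p) k (col p)"
  using cols unfolding bad_def by auto

lemma same_part_lt:
  assumes "u < N" "v < N" "u \<noteq> v" "part ss u = part ss v"
  shows "C u v < k \<and> C u v = C v u"
proof -
  have "loc ss u \<noteq> loc ss v" using assms part_loc_inj by blast
  moreover have "loc ss u < ss ! part ss v" "loc ss v < ss ! part ss v" "part ss v < length ss"
    using part_loc_bound[OF assms(1)] part_loc_bound[OF assms(2)] assms(4) by auto
  ultimately show ?thesis using colcol[of "part ss v"] assms
    unfolding comb_def is_coloring_def by auto
qed

lemma is_col: "is_coloring N (Suc k) C"
  unfolding is_coloring_def
proof (intro allI impI)
  fix u v assume "u < N" "v < N" "u \<noteq> v"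
  then show "C u v < Suc k \<and> C u v = C v u"
    using same_part_lt[of u v] by (cases "part ss u = part ss v") (auto simp: comb_def)
qed

lemma deg_k: assumes v: "v < N" shows "cdeg N C k v = N - ss ! part ss v"
proof -
  have "{u. u < N \<and> u \<noteq> v \<and> C v u = k} = {u. u < N} - {u. u < N \<and> part ss u = part ss v}"
  proof (intro set_eqI iffI)
    fix u assume u: "u \<in> {u. u < N \<and> u \<noteq> v \<and> C v u = k}"
    then have "part ss u \<noteq> part ss v" using same_part_lt[of v u] v by auto
    then show "u \<in> {u. u < N} - {u. u < N \<and> part ss u = part ss v}" using u by auto
  next
    fix u assume "u \<in> {u. u < N} - {u. u < N \<and> part ss u = part ss v}"
    then show "u \<in> {u. u < N \<and> u \<noteq> v \<and> C v u = k}" by (auto simp: comb_def)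
  qed
  then have "cdeg N C k v = card ({u. u < N} - {u. u < N \<and> part ss u = part ss v})"
    unfolding cdeg_def by simp
  also have "\<dots> = N - card {u. u < N \<and> part ss u = part ss v}"
    by (subst card_Diff_subset) auto
  also have "\<dots> = N - ss ! part ss v" using card_part part_loc_bound[OF v] by simp
  finally show ?thesis .
qed

lemma deg_j: assumes v: "v < N" and j: "j < k"
  shows "cdeg N C j v = cdeg (ss ! part ss v) (col (part ss v)) j (loc ss v)"
proof -
  let ?P = "part ss v"
  let ?A = "{u. u < N \<and> u \<noteq> v \<and> C v u = j}"
  let ?B = "{l. l < ss ! ?P \<and> l \<noteq> loc ss v \<and> col ?P (loc ss v) l = j}"
  have A: "\<And>u. u \<in> ?A \<Longrightarrow> part ss u = ?P" using j by (auto simp: comb_def split: if_splits)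
  have "bij_betw (loc ss) ?A ?B"
    unfolding bij_betw_def
  proof
    show "inj_on (loc ss) ?A"
    proof (rule inj_onI)
      fix x y assume "x \<in> ?A" "y \<in> ?A" "loc ss x = loc ss y"
      then show "x = y" using A[of x] A[of y] part_loc_inj[of x ss y] by auto
    qed
    show "loc ss ` ?A = ?B"
    proof
      show "loc ss ` ?A \<subseteq> ?B"
      proof
        fix l assume "l \<in> loc ss ` ?A"
        then obtain u where u: "u \<in> ?A" "l = loc ss u" by auto
        have "part ss u = ?P" using A u by auto
        moreover have "loc ss u \<noteq> loc ss v" using u part_loc_inj[of u ss v] v calculation by auto
        ultimately show "l \<in> ?B" using u part_loc_bound[of u ss]
          by (auto simp: comb_def)
      qed
      show "?B \<subseteq> loc ss ` ?A"
      proof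
        fix l assume l: "l \<in> ?B"
        obtain u where u: "u < N" "part ss u = ?P" "loc ss u = l"
          using part_loc_surj[of ?P ss l] part_loc_bound[OF v] l by auto
        have "u \<noteq> v" using u l by auto
        then show "l \<in> loc ss ` ?A" using u l by (auto simp: comb_def)
      qed
    qed
  qed
  then show ?thesis unfolding cdeg_def by (simp add: bij_betw_same_card)
qed

lemma path_j: assumes j: "j < k" and dp: "dm_path N C j p" shows "length p \<le> a"
proof (cases "p = []")
  case True then show ?thesis by simp
next
  case False
  define P where "P = part ss (p ! 0)"
  have allN: "\<forall>x\<in>set p. x < N" using dp unfolding dm_path_def by auto
  have inN: "\<And>i. i < length p \<Longrightarrow> p ! i < N" using allN by simp
  have step: "\<And>i. Suc i < length p \<Longrightarrow> C (p!i) (p!Suc i) = j" using dp unfolding dm_path_def by auto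
  have allP: "\<And>i. i < length p \<Longrightarrow> part ss (p ! i) = P"
  proof -
    fix i show "i < length p \<Longrightarrow> part ss (p ! i) = P"
    proof (induction i)
      case 0 then show ?case by (simp add: P_def)
    next
      case (Suc i)
      then have "C (p!i) (p!Suc i) = j" using step by auto
      then have "part ss (p!i) = part ss (p!Suc i)" using j by (auto simp: comb_def split: if_splits)
      then show ?case using Suc by simp
    qed
  qed
  have p0: "0 < length p" using False by simp
  have P: "P < length ss" using part_loc_bound[OF inN[OF p0]] unfolding P_def by simp
  define q where "q = map (loc ss) p"
  have injp: "inj_on (loc ss) (set p)"
  proof (rule inj_onI)
    fix x y assume "x \<in> set p" "y \<in> set p" "loc ss x = loc ss y"
    then obtain i i' where "i < length p" "x = p ! i" "i' < length p" "y = p ! i'" "loc ss x = loc ss y"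
      by (auto simp: in_set_conv_nth)
    then show "x = y" using allP[of i] allP[of i'] inN[of i] inN[of i'] part_loc_inj[of x ss y] by simp
  qed
  have "dm_path (ss ! P) (col P) j q"
    unfolding dm_path_def
  proof (intro conjI allI impI)
    show "distinct q" using dp injp unfolding q_def dm_path_def by (simp add: distinct_map)
    show "set q \<subseteq> {..<ss ! P}"
    proof
      fix x assume "x \<in> set q"
      then obtain i where i: "i < length p" "x = loc ss (p ! i)" unfolding q_def by (auto simp: in_set_conv_nth)
      show "x \<in> {..<ss ! P}" using part_loc_bound[OF inN[OF i(1)]] allP[OF i(1)] i(2) by simp
    qed
  next
    fix i assume i: "Suc i < length q"
    then have i': "Suc i < length p" by (simp add: q_def)
    have e: "part ss (p!i) = part ss (p!Suc i)" using allP i' by simp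
    show "col P (q ! i) (q ! Suc i) = j"
      using step[OF i'] e allP[of i] i' unfolding q_def comb_def by simp
    show "cdeg (ss ! P) (col P) j (q ! i) \<le> cdeg (ss ! P) (col P) j (q ! Suc i)"
    proof -
      have "cdeg N C j (p!i) \<le> cdeg N C j (p!Suc i)" using dp i' unfolding dm_path_def by blast
      then show ?thesis
        using i' deg_j[OF inN j, of i] deg_j[OF inN j, of "Suc i"] allP[of i] allP[of "Suc i"]
        unfolding q_def by simp
    qed
  qed
  then have "length q \<le> a" using cols[OF P] j unfolding bad_def by auto
  then show ?thesis by (simp add: q_def)
qed

lemma path_k: assumes dp: "dm_path N C k p" shows "length p \<le> a"
proof -
  have allN: "\<forall>x\<in>set p. x < N" using dp unfolding dm_path_def by auto
  have inN: "\<And>i. i < length p \<Longrightarrow> p ! i < N" using allN by simp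
  define g where "g v = ss ! part ss v" for v
  have st: "\<And>i. Suc i < length p \<Longrightarrow> g (p ! Suc i) < g (p ! i)"
  proof -
    fix i assume i: "Suc i < length p"
    have i0: "i < length p" using i by simp
    have ne: "p ! i \<noteq> p ! Suc i" using dp i unfolding dm_path_def by (simp add: nth_eq_iff_index_eq)
    have c: "C (p!i) (p!Suc i) = k" using dp i unfolding dm_path_def by auto
    have dp': "part ss (p!i) \<noteq> part ss (p!Suc i)"
      using same_part_lt[of "p!i" "p!Suc i"] inN i ne c by auto
    have b1: "part ss (p!i) < length ss" "part ss (p!Suc i) < length ss"
      using part_loc_bound[OF inN[OF i0]] part_loc_bound[OF inN[OF i]] by auto
    have le: "cdeg N C k (p!i) \<le> cdeg N C k (p!Suc i)" using dp i unfolding dm_path_def by auto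
    have "g (p!i) \<le> N" "g (p!Suc i) \<le> N" using b1 elem_le_sum_list unfolding g_def by auto
    moreover have "N - g (p!i) \<le> N - g (p!Suc i)"
      using le deg_k[OF inN[OF i0]] deg_k[OF inN[OF i]] unfolding g_def by simp
    moreover have "g (p!i) \<noteq> g (p!Suc i)"
      using dist b1 dp' unfolding g_def by (simp add: nth_eq_iff_index_eq)
    ultimately show "g (p ! Suc i) < g (p ! i)" by linarith
  qed
  have tr: "transp (\<lambda>x y :: nat. y < x)" unfolding transp_def by auto
  have "sorted_wrt (\<lambda>x y. y < x) (map g p)"
    using st by (simp add: sorted_wrt_iff_nth_Suc_transp[OF tr])
  then have "distinct (map g p)" by (rule sorted_wrt_irrefl_distinct) simp
  moreover have "map g p = map (nth ss) (map (part ss) p)" by (simp add: g_def)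
  ultimately have "distinct (map (nth ss) (map (part ss) p))" by (simp only:)
  then have dpart: "distinct (map (part ss) p)" by (rule distinct_map[THEN iffD1, THEN conjunct1])
  have sub: "set (map (part ss) p) \<subseteq> {..<length ss}"
  proof
    fix x assume "x \<in> set (map (part ss) p)"
    then obtain i where i: "i < length p" "x = part ss (p ! i)" by (auto simp: in_set_conv_nth)
    show "x \<in> {..<length ss}" using part_loc_bound[OF inN[OF i(1)]] i(2) by simp
  qed
  have "card (set (map (part ss) p)) \<le> card {..<length ss}"
    by (rule card_mono[OF _ sub]) simp
  moreover have "card (set (map (part ss) p)) = length (map (part ss) p)"
    by (rule distinct_card[OF dpart])
  ultimately have "length p \<le> length ss" by simp
  then show ?thesis using len by simp
qed

lemma comb_bad: "bad N (Suc k) C a"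
  unfolding bad_def using is_col path_j path_k less_Suc_eq by blast

end


lemma decomp: "2*n + a*(a-1) \<le> 2*a*N \<Longrightarrow>
  \<exists>ss. distinct ss \<and> length ss \<le> a \<and> sum_list ss = n \<and> (\<forall>s\<in>set ss. s \<le> N)"
proof (induction a arbitrary: n N)
  case 0 then show ?case by (intro exI[of _ "[]"]) auto
next
  case (Suc a)
  show ?case
  proof (cases "n \<le> N")
    case True then show ?thesis by (intro exI[of _ "[n]"]) auto
  next
    case False
    obtain N' where N': "N = Suc N'" using False Suc.prems by (cases N) auto
    obtain a' where a': "a = Suc a'" using False Suc.prems by (cases a) auto
    obtain d where d: "n = N + d" using False le_Suc_ex[of N n] by auto
    have "2*(n - N) + a*(a-1) \<le> 2*a*N'"
      using Suc.prems unfolding N' a' d by (simp add: algebra_simps)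
    then obtain ss where ss: "distinct ss" "length ss \<le> a" "sum_list ss = n - N" "\<forall>s\<in>set ss. s \<le> N'"
      using Suc.IH by blast
    have "N \<notin> set ss" using ss(4) N' by auto
    then show ?thesis using ss False N' by (intro exI[of _ "N # ss"]) auto
  qed
qed

lemma constr:
  assumes a: "1 \<le> a" and k: "1 \<le> k"
  shows "\<forall>n. 2*n \<le> a^k + a \<longrightarrow> (\<exists>c. bad n k c a)"
  using k
proof (induction k rule: nat_induct_at_least)
  case base
  show ?case
  proof (intro allI impI)
    fix n :: nat assume "2*n \<le> a^1 + a"
    then have n: "n \<le> a" by simp
    have "bad n 1 (\<lambda>u v. 0) a"
      unfolding bad_def is_coloring_def using n by (auto dest: dm_len)
    then show "\<exists>c. bad n 1 c a" by blast
  qed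
next
  case (Suc k)
  show ?case
  proof (intro allI impI)
    fix n :: nat assume n: "2*n \<le> a^Suc k + a"
    define N where "N = (a^k + a) div 2"
    have ev: "even (a^k + a)" using Suc.hyps by (simp add: even_add even_power)
    then have N2: "2*N = a^k + a" unfolding N_def by simp
    have aa: "a*(a-1) + a = a*a" using a by (cases a) auto
    have "2*a*N = a*(2*N)" by (simp add: mult_ac)
    also have "\<dots> = a*(a^k+a)" using N2 by simp
    also have "\<dots> = a^Suc k + a*a" by (simp add: algebra_simps)
    finally have "2*a*N = a^Suc k + a*a" .
    then have "2*n + a*(a-1) \<le> 2*a*N" using n aa by linarith
    from decomp[OF this] obtain ss where ss: "distinct ss" "length ss \<le> a" "sum_list ss = n" "\<forall>s\<in>set ss. s \<le> N"
      by blast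
    define col where "col p = (SOME c. bad (ss!p) k c a)" for p
    have cols: "bad (ss ! p) k (col p) a" if p: "p < length ss" for p
    proof -
      have "ss ! p \<le> N" using ss(4) p by auto
      then have "2*(ss!p) \<le> a^k + a" using N2 by linarith
      then have "\<exists>c. bad (ss!p) k c a" using Suc.IH by blast
      then show ?thesis unfolding col_def by (rule someI_ex)
    qed
    have "combo ss col k a"
      using ss(1,2) cols by unfold_locales
    then have "bad (sum_list ss) (Suc k) (comb ss col k) a" by (rule combo.comb_bad)
    then show "\<exists>c. bad n (Suc k) c a" using ss(3) by blast
  qed
qed

theorem theorem1p2:
  fixes k m :: nat
  assumes "k \<ge> 2" and "m \<ge> 3"
  shows "(\<exists>M. good (replicate k m) M) \<and>
         real ((m - 1) ^ k) / 2 + (real m - 1) / 2 + 1 \<le> real (Mk k m) \<and>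
         Mk k m \<le> (m - 1) ^ k + 1 \<and>
         (\<forall>ms :: nat list. ms \<noteq> [] \<and> (\<forall>x\<in>set ms. x > 0) \<longrightarrow>
            (\<exists>M. good ms M) \<and> Mnum ms \<le> prod_list (map (\<lambda>x. x - 1) ms) + 1)"
proof -
  define a where "a = m - 1"
  have a1: "1 \<le> a" using assms unfolding a_def by simp
  have ra: "real m - 1 = real a" using assms unfolding a_def by simp
  have gen: "(\<exists>M. good ms M) \<and> Mnum ms \<le> prod_list (map (\<lambda>x. x - 1) ms) + 1" for ms :: "nat list"
    using upper[of ms] unfolding Mnum_def by (auto intro: Least_le)
  have pr: "prod_list (map (\<lambda>x. x - 1) (replicate k m)) = (m - 1) ^ k"
    by (simp add: prod_list_replicate)
  have up: "good (replicate k m) ((m - 1) ^ k + 1)" using upper[of "replicate k m"] pr by simp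
  have upb: "Mk k m \<le> (m - 1) ^ k + 1" unfolding Mk_def Mnum_def using up by (rule Least_le)
  have gM: "good (replicate k m) (Mk k m)" unfolding Mk_def Mnum_def using up by (rule LeastI)
  define n0 where "n0 = (a^k + a) div 2"
  have ev: "even (a^k + a)" using assms by (simp add: even_add even_power)
  then have N2: "2*n0 = a^k + a" unfolding n0_def by simp
  have k1: "1 \<le> k" using assms by simp
  have "\<exists>c. bad n0 k c a" using constr[OF a1 k1] N2 by simp
  then obtain c0 where c0: "bad n0 k c0 a" by blast
  have "n0 < Mk k m"
  proof (rule ccontr)
    assume "\<not> n0 < Mk k m"
    then have "n0 \<ge> Mk k m" by simp
    moreover have "is_coloring n0 (length (replicate k m)) c0" using c0 unfolding bad_def by simp
    ultimately have "\<exists>j<length (replicate k m). replicate k m ! j \<le> mp n0 c0 j"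
      using gM unfolding good_def by blast
    then obtain j where j: "j < k" "m \<le> mp n0 c0 j" by auto
    have "mp n0 c0 j \<le> a" using c0 j(1) unfolding bad_def by (auto intro: mp_le)
    then show False using j(2) assms unfolding a_def by simp
  qed
  then have "real n0 + 1 \<le> real (Mk k m)" by simp
  moreover have "real ((m - 1) ^ k) / 2 + (real m - 1) / 2 + 1 = real n0 + 1"
  proof -
    have "real (2*n0) = real (a^k) + real a" using N2 by (metis of_nat_add)
    then show ?thesis unfolding ra a_def[symmetric] by simp
  qed
  ultimately show ?thesis using gen upb up by auto
qed

end
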